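(* Let $A, B, C, F \in \mathbb{R}^{n\times n}$ with $A$ and $C$ non-singular, and let $I$ be the $n\times n$ identity matrix. Suppose that $$\rho\left((I\otimes CA^{-1}B)D\right) < 1$$ for every diagonal matrix $D = \mathrm{diag}(d_i) \in \mathbb{R}^{n^2\times n^2}$ with all $d_i \in [-1,1]$. Then the matrix equation $$AX + B\lvert CX\rvert = F$$ has exactly one solution $X \in \mathbb{R}^{n\times n}$.
   Context: $\otimes$ denotes the Kronecker product, $\rho(\cdot)$ the spectral radius, and $\lvert M\rvert$ the entrywise absolute value. *)

theory Defs
  imports "Jordan_Normal_Form.Spectral_Radius" "Jordan_Normal_Form.Gauss_Jordan_Elimination"
begin

(* Kronecker product: (P \<otimes> Q) at ((i,k),(j,l)) = P(i,j) * Q(k,l), with the pair (i,k)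
   encoded as row index i * dim_row Q + k (standard ordering). *)
definition kron_mat :: "'a::times mat \<Rightarrow> 'a mat \<Rightarrow> 'a mat" where
  "kron_mat P Q = mat (dim_row P * dim_row Q) (dim_col P * dim_col Q)
     (\<lambda>(i, j). P $$ (i div dim_row Q, j div dim_col Q) * Q $$ (i mod dim_row Q, j mod dim_col Q))"

definition abs_mat :: "'a::abs mat \<Rightarrow> 'a mat" where
  "abs_mat M = map_mat abs M"

definition real_spectral_radius :: "real mat \<Rightarrow> real" where
  "real_spectral_radius M = spectral_radius (map_mat complex_of_real M)"

end

theory Submission
  imports Defs "HOL-Homology.Invariance_of_Domain"
begin

definition HypM :: "real mat \<Rightarrow> nat \<Rightarrow> bool" where
  "HypM M n \<longleftrightarrow> (\<forall>d w. (\<forall>l<n. \<bar>d l\<bar> \<le> 1) \<longrightarrow>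
      (\<forall>i<n. w i + (\<Sum>l<n. M $$ (i,l) * (d l * w l)) = 0) \<longrightarrow> (\<forall>i<n. w i = (0::real)))"

lemma vec_unique:
  assumes H: "HypM M n"
    and eq: "\<forall>i<n. y1 i + (\<Sum>l<n. M $$ (i,l) * \<bar>y1 l\<bar>) = y2 i + (\<Sum>l<n. M $$ (i,l) * \<bar>y2 l\<bar>)"
  shows "\<forall>i<n. y1 i = (y2 i :: real)"
proof -
  define d where "d l = (if y1 l = y2 l then 0 else (\<bar>y1 l\<bar> - \<bar>y2 l\<bar>)/(y1 l - y2 l))" for l
  have dl: "\<bar>d l\<bar> \<le> 1" for l
  proof (cases "y1 l = y2 l")
    case False
    then have "\<bar>y1 l - y2 l\<bar> > 0" by simp
    moreover have "\<bar>\<bar>y1 l\<bar> - \<bar>y2 l\<bar>\<bar> \<le> \<bar>y1 l - y2 l\<bar>" by (rule abs_triangle_ineq3)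
    ultimately show ?thesis using False by (simp add: d_def abs_divide divide_le_eq_1)
  qed (simp add: d_def)
  have dw: "d l * (y1 l - y2 l) = \<bar>y1 l\<bar> - \<bar>y2 l\<bar>" for l
    by (simp add: d_def)
  have "\<forall>i<n. (y1 i - y2 i) + (\<Sum>l<n. M $$ (i,l) * (d l * (y1 l - y2 l))) = 0"
  proof (intro allI impI)
    fix i assume "i < n"
    have "(\<Sum>l<n. M $$ (i,l) * (d l * (y1 l - y2 l))) =
        (\<Sum>l<n. M $$ (i,l) * \<bar>y1 l\<bar>) - (\<Sum>l<n. M $$ (i,l) * \<bar>y2 l\<bar>)"
    proof -
      have "(\<Sum>l<n. M $$ (i,l) * (d l * (y1 l - y2 l))) = (\<Sum>l<n. M $$ (i,l) * (\<bar>y1 l\<bar> - \<bar>y2 l\<bar>))"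
        by (simp only: dw)
      also have "\<dots> = (\<Sum>l<n. M $$ (i,l) * \<bar>y1 l\<bar>) - (\<Sum>l<n. M $$ (i,l) * \<bar>y2 l\<bar>)"
        by (simp add: sum_subtractf right_diff_distrib)
      finally show ?thesis .
    qed
    then show "(y1 i - y2 i) + (\<Sum>l<n. M $$ (i,l) * (d l * (y1 l - y2 l))) = 0"
    proof -
      have "y1 i + (\<Sum>l<n. M $$ (i,l) * \<bar>y1 l\<bar>) = y2 i + (\<Sum>l<n. M $$ (i,l) * \<bar>y2 l\<bar>)"
        using eq \<open>i < n\<close> by blast
      with \<open>(\<Sum>l<n. M $$ (i,l) * (d l * (y1 l - y2 l))) = _\<close> show ?thesis by linarith
    qed
  qed
  then have "\<forall>i<n. y1 i - y2 i = 0"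
    using H[unfolded HypM_def, rule_format, of d "\<lambda>l. y1 l - y2 l"] dl by blast
  then show ?thesis by simp
qed

lemma vec_exists:
  assumes H: "HypM M n"
  shows "\<exists>y. \<forall>i<n. y i + (\<Sum>l<n. M $$ (i,l) * \<bar>y l\<bar>) = (g i :: real)"
proof -
  define T where "T = {x::nat\<Rightarrow>real. \<forall>i\<ge>n. x i = 0}"
  have E: "Euclidean_space n = top_of_set T"
    by (simp add: Euclidean_space_def euclidean_product_topology T_def)
  define \<Phi> where "\<Phi> = (\<lambda>y i. if i < n then y i + (\<Sum>l<n. M $$ (i,l) * \<bar>y l\<bar>) else (0::real))"
  have cont: "continuous_map (subtopology (Euclidean_space n) T) (Euclidean_space n) \<Phi>"
    unfolding \<Phi>_def continuous_map_componentwise_Euclidean_space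
  proof (intro allI impI)
    fix i assume "i < n"
    have "continuous_on UNIV (\<lambda>y::nat\<Rightarrow>real. y i + (\<Sum>l<n. M $$ (i,l) * \<bar>y l\<bar>))"
      by (intro continuous_intros continuous_on_product_coordinates)
    then have "continuous_on T (\<lambda>y::nat\<Rightarrow>real. y i + (\<Sum>l<n. M $$ (i,l) * \<bar>y l\<bar>))"
      by (rule continuous_on_subset) simp
    then show "continuous_map (subtopology (Euclidean_space n) T) euclideanreal
        (\<lambda>y::nat\<Rightarrow>real. y i + (\<Sum>l<n. M $$ (i,l) * \<bar>y l\<bar>))"
      by (simp add: E subtopology_subtopology continuous_map_iff_continuous)
  qed
  have inj: "inj_on \<Phi> T"
  proof (rule inj_onI)
    fix x y assume x: "x \<in> T" and y: "y \<in> T" and eq: "\<Phi> x = \<Phi> y"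
    have "\<forall>i<n. x i + (\<Sum>l<n. M $$ (i,l) * \<bar>x l\<bar>) = y i + (\<Sum>l<n. M $$ (i,l) * \<bar>y l\<bar>)"
      using eq unfolding \<Phi>_def by (metis (no_types, lifting))
    from vec_unique[OF H this] have "\<forall>i<n. x i = y i" .
    show "x = y"
    proof (rule ext)
      fix i show "x i = y i"
      proof (cases "i < n")
        case True then show ?thesis using \<open>\<forall>i<n. x i = y i\<close> by blast
      next
        case False then show ?thesis using x y unfolding T_def by simp
      qed
    qed
  qed
  have opT: "openin (Euclidean_space n) T"
    by (metis openin_topspace topspace_Euclidean_space T_def)
  have "openin (Euclidean_space n) (\<Phi> ` T)"
    by (rule invariance_of_domain_Euclidean_space[OF opT cont inj])
  then obtain U where U: "open U" "\<Phi> ` T = T \<inter> U"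
    unfolding E openin_open by blast
  have z: "(\<lambda>i. 0) \<in> T" by (simp add: T_def)
  have "\<Phi> (\<lambda>i. 0) = (\<lambda>i. 0)" unfolding \<Phi>_def by (rule ext) simp
  with z U have zU: "(\<lambda>i. 0::real) \<in> U" by (metis IntD2 image_eqI)
  define g' where "g' = (\<lambda>i. if i < n then g i else 0)"
  define \<phi> where "\<phi> t = (\<lambda>i. t * g' i)" for t :: real
  have "continuous_on UNIV \<phi>"
    unfolding \<phi>_def by (intro continuous_on_coordinatewise_then_product continuous_intros)
  then have "open (\<phi> -` U)" using U(1) by (simp add: open_vimage)
  moreover have "0 \<in> \<phi> -` U" using zU by (simp add: \<phi>_def)
  ultimately obtain e where e: "e > 0" "ball 0 e \<subseteq> \<phi> -` U"
    using open_contains_ball by blast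
  define t where "t = e / 2"
  have t: "t > 0" "t \<in> ball 0 e" using e by (auto simp: t_def)
  then have "\<phi> t \<in> U" using e(2) by blast
  moreover have "\<phi> t \<in> T" by (simp add: \<phi>_def g'_def T_def)
  ultimately have "\<phi> t \<in> \<Phi> ` T" using U by blast
  then obtain y where y: "\<Phi> y = \<phi> t" by (auto elim!: imageE)
  show ?thesis
  proof (intro exI allI impI)
    fix i assume i: "i < n"
    have "y i + (\<Sum>l<n. M $$ (i,l) * \<bar>y l\<bar>) = t * g i"
      using fun_cong[OF y, of i] i by (simp add: \<Phi>_def \<phi>_def g'_def)
    then have "(y i + (\<Sum>l<n. M $$ (i,l) * \<bar>y l\<bar>)) / t = g i" using t by simp
    moreover have "(y i + (\<Sum>l<n. M $$ (i,l) * \<bar>y l\<bar>)) / t =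
        y i / t + (\<Sum>l<n. M $$ (i,l) * \<bar>y l / t\<bar>)"
      using t by (simp add: add_divide_distrib sum_divide_distrib abs_divide)
    ultimately show "y i / t + (\<Sum>l<n. M $$ (i,l) * \<bar>y l / t\<bar>) = g i" by simp
  qed
qed


lemma hyp_from_spec:
  assumes M: "M \<in> carrier_mat n n"
    and S: "\<forall>D \<in> carrier_mat (n * n) (n * n). diagonal_mat D \<and> (\<forall>i < n * n. \<bar>D $$ (i, i)\<bar> \<le> 1)
           \<longrightarrow> real_spectral_radius (kron_mat (1\<^sub>m n) M * D) < 1"
  shows "HypM M n"
  unfolding HypM_def
proof (rule allI, rule allI, rule impI, rule impI)
  fix d w :: "nat \<Rightarrow> real"
  assume dl: "\<forall>l<n. \<bar>d l\<bar> \<le> 1"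
    and eq: "\<forall>i<n. w i + (\<Sum>l<n. M $$ (i,l) * (d l * w l)) = 0"
  show "\<forall>i<n. w i = 0"
  proof (rule ccontr)
    assume "\<not> (\<forall>i<n. w i = 0)"
    then obtain k where k: "k < n" "w k \<noteq> 0" by blast
    then have n0: "n > 0" by simp
    have nn: "n \<le> n*n" using mult_le_mono1[of 1 n n] n0 by simp
    define D where "D = Matrix.mat (n*n) (n*n) (\<lambda>(p,q). if p = q then d (p mod n) else 0)"
    define K where "K = kron_mat (1\<^sub>m n) M"
    have Dc: "D \<in> carrier_mat (n*n) (n*n)" by (simp add: D_def)
    have Kc: "K \<in> carrier_mat (n*n) (n*n)" using M by (simp add: K_def kron_mat_def)
    have Ddiag: "diagonal_mat D" by (simp add: D_def diagonal_mat_def)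
    have Dabs: "\<forall>i < n * n. \<bar>D $$ (i, i)\<bar> \<le> 1"
      using dl n0 by (simp add: D_def)
    have lt: "real_spectral_radius (K * D) < 1"
      using S Dc Ddiag Dabs unfolding K_def by blast
    have Kent: "K $$ (p,q) = (if p div n = q div n then M $$ (p mod n, q mod n) else 0)"
      if "p < n*n" "q < n*n" for p q
    proof -
      have "p div n < n" "q div n < n" using that by (simp_all add: less_mult_imp_div_less)
      then show ?thesis using that M by (simp add: K_def kron_mat_def)
    qed
    have Pent: "(K * D) $$ (p,q) = K $$ (p,q) * d (q mod n)" if "p < n*n" "q < n*n" for p q
    proof -
      have "(K * D) $$ (p,q) = (\<Sum>r\<in>{0..<n*n}. K $$ (p,r) * D $$ (r,q))"
        using that Kc Dc by (simp add: scalar_prod_def)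
      also have "\<dots> = (\<Sum>r\<in>{0..<n*n}. if r = q then K $$ (p,q) * d (q mod n) else 0)"
        by (rule sum.cong) (use that in \<open>auto simp: D_def\<close>)
      also have "\<dots> = K $$ (p,q) * d (q mod n)" using that by simp
      finally show ?thesis .
    qed
    define P where "P = K * D"
    have Pc: "P \<in> carrier_mat (n*n) (n*n)" using Kc Dc by (simp add: P_def)
    define v where "v = Matrix.vec (n*n) (\<lambda>p. if p < n then w p else 0)"
    have vc: "v \<in> carrier_vec (n*n)" by (simp add: v_def)
    have Pv: "P *\<^sub>v v = (-1) \<cdot>\<^sub>v v"
    proof (rule eq_vecI)
      show "dim_vec (P *\<^sub>v v) = dim_vec ((-1) \<cdot>\<^sub>v v)" using Pc by (simp add: v_def)
    next
      fix p assume "p < dim_vec ((-1) \<cdot>\<^sub>v v)"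
      then have p: "p < n*n" by (simp add: v_def)
      have "(P *\<^sub>v v) $ p = (\<Sum>q\<in>{0..<n*n}. P $$ (p,q) * v $ q)"
        using p Pc by (simp add: scalar_prod_def v_def)
      also have "\<dots> = (\<Sum>q\<in>{0..<n}. P $$ (p,q) * v $ q)"
      proof (rule sum.mono_neutral_right)
        show "{0..<n} \<subseteq> {0..<n*n}" using nn by auto
        show "\<forall>q\<in>{0..<n * n} - {0..<n}. P $$ (p, q) * v $ q = 0" by (simp add: v_def)
      qed simp
      also have "\<dots> = (\<Sum>q\<in>{0..<n}. (if p div n = 0 then M $$ (p mod n, q) else 0) * d q * w q)"
      proof (rule sum.cong)
        fix q assume "q \<in> {0..<n}"
        then have q: "q < n" by simp
        then have qn: "q < n*n" using nn by linarith
        show "P $$ (p,q) * v $ q = (if p div n = 0 then M $$ (p mod n, q) else 0) * d q * w q"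
          using q qn p by (simp add: P_def Pent Kent v_def)
      qed simp
      also have "\<dots> = ((-1) \<cdot>\<^sub>v v) $ p"
      proof (cases "p < n")
        case True
        then have "(\<Sum>q\<in>{0..<n}. (if p div n = 0 then M $$ (p mod n, q) else 0) * d q * w q)
           = (\<Sum>l<n. M $$ (p,l) * (d l * w l))"
          by (simp add: lessThan_atLeast0 mult.assoc)
        also have "\<dots> = - w p"
        proof -
          have "w p + (\<Sum>l<n. M $$ (p,l) * (d l * w l)) = 0" using eq True by blast
          then show ?thesis by linarith
        qed
        finally show ?thesis using True p by (simp add: v_def)
      next
        case False
        then have "p div n \<noteq> 0" using n0 by (simp add: div_eq_0_iff)
        then show ?thesis using False p by (simp add: v_def)
      qed
      finally show "(P *\<^sub>v v) $ p = ((-1) \<cdot>\<^sub>v v) $ p" .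
    qed
    have kn: "k < n*n" using k nn by linarith
    define cv where "cv = map_vec complex_of_real v"
    define CP where "CP = map_mat complex_of_real (K * D)"
    have CPc: "CP \<in> carrier_mat (n*n) (n*n)" using Kc Dc by (simp add: CP_def)
    have "CP *\<^sub>v cv = map_vec complex_of_real ((K * D) *\<^sub>v v)"
      unfolding CP_def cv_def
      by (rule of_real_hom.mult_mat_vec_hom[symmetric]) (use Kc Dc vc in auto)
    also have "\<dots> = (-1) \<cdot>\<^sub>v cv" unfolding P_def[symmetric] Pv cv_def by (auto simp: v_def)
    finally have ev: "CP *\<^sub>v cv = (-1) \<cdot>\<^sub>v cv" .
    have "cv \<noteq> 0\<^sub>v (n*n)"
    proof
      assume "cv = 0\<^sub>v (n*n)"
      then have "cv $ k = 0" using kn by simp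
      then show False using k kn by (simp add: cv_def v_def)
    qed
    then have "eigenvector CP cv (-1)" unfolding eigenvector_def using ev CPc vc
      by (simp add: cv_def)
    then have "-1 \<in> Spectral_Radius.spectrum CP" unfolding Spectral_Radius.spectrum_def eigenvalue_def by auto
    then have "norm (-1::complex) \<le> spectral_radius CP"
    proof -
      have nn0: "0 < n*n" using n0 by simp
      show ?thesis
        by (rule spectral_radius_mem_max(2)[OF CPc nn0]) (use \<open>-1 \<in> Spectral_Radius.spectrum CP\<close> in blast)
    qed
    then have "1 \<le> real_spectral_radius (K * D)" by (simp add: real_spectral_radius_def CP_def)
    with lt show False by simp
  qed
qed


lemma mat_entry:
  assumes Y: "Y \<in> carrier_mat n n" and M: "M \<in> carrier_mat n n" and i: "i < n" and j: "j < n"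
  shows "(Y + M * abs_mat Y) $$ (i,j) = Y $$ (i,j) + (\<Sum>l<n. M $$ (i,l) * \<bar>Y $$ (l,j)\<bar>)"
  using assms by (simp add: abs_mat_def scalar_prod_def lessThan_atLeast0)

lemma mat_unique:
  assumes H: "HypM M n" and M: "M \<in> carrier_mat n n"
    and Y1: "Y1 \<in> carrier_mat n n" and Y2: "Y2 \<in> carrier_mat n n"
    and eq: "Y1 + M * abs_mat Y1 = Y2 + M * abs_mat Y2"
  shows "Y1 = Y2"
proof (rule eq_matI)
  fix i j assume i: "i < dim_row Y2" and j: "j < dim_col Y2"
  then have i': "i < n" and j': "j < n" using Y2 by auto
  have "\<forall>i<n. Y1 $$ (i,j) + (\<Sum>l<n. M $$ (i,l) * \<bar>Y1 $$ (l,j)\<bar>) = Y2 $$ (i,j) + (\<Sum>l<n. M $$ (i,l) * \<bar>Y2 $$ (l,j)\<bar>)"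
  proof (intro allI impI)
    fix i assume "i < n"
    then show "Y1 $$ (i,j) + (\<Sum>l<n. M $$ (i,l) * \<bar>Y1 $$ (l,j)\<bar>) = Y2 $$ (i,j) + (\<Sum>l<n. M $$ (i,l) * \<bar>Y2 $$ (l,j)\<bar>)"
      using mat_entry[OF Y1 M \<open>i<n\<close> j'] mat_entry[OF Y2 M \<open>i<n\<close> j'] eq by simp
  qed
  from vec_unique[OF H this] i' show "Y1 $$ (i,j) = Y2 $$ (i,j)" by blast
qed (use Y1 Y2 in auto)

lemma mat_exists:
  assumes H: "HypM M n" and M: "M \<in> carrier_mat n n" and G: "G \<in> carrier_mat n n"
  shows "\<exists>Y. Y \<in> carrier_mat n n \<and> Y + M * abs_mat Y = G"
proof -
  have "\<forall>j. \<exists>y. \<forall>i<n. y i + (\<Sum>l<n. M $$ (i,l) * \<bar>y l\<bar>) = G $$ (i,j)"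
  proof
    fix j show "\<exists>y. \<forall>i<n. y i + (\<Sum>l<n. M $$ (i,l) * \<bar>y l\<bar>) = G $$ (i,j)"
      by (rule vec_exists[OF H])
  qed
  from choice[OF this] obtain yf where yf0: "\<forall>j. \<forall>i<n. yf j i + (\<Sum>l<n. M $$ (i,l) * \<bar>yf j l\<bar>) = G $$ (i,j)"
    by blast
  have yf: "\<And>j i. i < n \<Longrightarrow> yf j i + (\<Sum>l<n. M $$ (i,l) * \<bar>yf j l\<bar>) = G $$ (i,j)"
    using yf0 by blast
  define Y where "Y = Matrix.mat n n (\<lambda>(i,j). yf j i)"
  have Yc: "Y \<in> carrier_mat n n" by (simp add: Y_def)
  have "Y + M * abs_mat Y = G"
  proof (rule eq_matI)
    fix i j assume "i < dim_row G" "j < dim_col G"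
    then have i: "i < n" and j: "j < n" using G by auto
    have "(\<Sum>l<n. M $$ (i,l) * \<bar>Y $$ (l,j)\<bar>) = (\<Sum>l<n. M $$ (i,l) * \<bar>yf j l\<bar>)"
      by (rule sum.cong) (use j in \<open>auto simp: Y_def\<close>)
    then show "(Y + M * abs_mat Y) $$ (i,j) = G $$ (i,j)"
      using mat_entry[OF Yc M i j] yf[OF i, of j] i j by (simp add: Y_def)
  qed (use G M Yc in \<open>auto simp: abs_mat_def\<close>)
  with Yc show ?thesis by blast
qed

lemma inv_exists:
  assumes A: "A \<in> carrier_mat n n" and d: "det A \<noteq> (0::real)"
  shows "A * the (mat_inverse A) = 1\<^sub>m n \<and> the (mat_inverse A) * A = 1\<^sub>m n \<and> the (mat_inverse A) \<in> carrier_mat n n"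
proof (cases "mat_inverse A")
  case None
  from mat_inverse(1)[OF A None, of undefined] det_non_zero_imp_unit[OF A d, of undefined] show ?thesis by blast
next
  case (Some K)
  from mat_inverse(2)[OF A Some] Some show ?thesis by simp
qed

theorem theorem4p5:
  fixes A B C F :: "real mat" and n :: nat
  assumes "A \<in> carrier_mat n n" "B \<in> carrier_mat n n" "C \<in> carrier_mat n n" "F \<in> carrier_mat n n"
    and "det A \<noteq> 0" and "det C \<noteq> 0"
    and "\<forall>D \<in> carrier_mat (n * n) (n * n). diagonal_mat D \<and> (\<forall>i < n * n. \<bar>D $$ (i, i)\<bar> \<le> 1)
           \<longrightarrow> real_spectral_radius (kron_mat (1\<^sub>m n) (C * the (mat_inverse A) * B) * D) < 1"
  shows "\<exists>!X. X \<in> carrier_mat n n \<and> A * X + B * abs_mat (C * X) = F"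
proof -
  note Ac = assms(1) and Bc = assms(2) and Cc = assms(3) and Fc = assms(4)
  define K where "K = the (mat_inverse A)"
  define Ci where "Ci = the (mat_inverse C)"
  have K: "A * K = 1\<^sub>m n" "K * A = 1\<^sub>m n" "K \<in> carrier_mat n n"
    using inv_exists[OF Ac assms(5)] unfolding K_def by auto
  have Ci: "C * Ci = 1\<^sub>m n" "Ci * C = 1\<^sub>m n" "Ci \<in> carrier_mat n n"
    using inv_exists[OF Cc assms(6)] unfolding Ci_def by auto
  define M where "M = C * K * B"
  define G where "G = C * K * F"
  have Mc: "M \<in> carrier_mat n n" using Cc K(3) Bc by (simp add: M_def)
  have Gc: "G \<in> carrier_mat n n" using Cc K(3) Fc by (simp add: G_def)
  have H: "HypM M n"
    by (rule hyp_from_spec[OF Mc]) (use assms(7) in \<open>simp add: M_def K_def\<close>)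
  have CKA: "C * K * A = C"
    using Cc K Ac by (simp add: assoc_mult_mat[of C n n K n A n])
  have ACi: "A * Ci * C = A"
    using Cc Ci Ac by (simp add: assoc_mult_mat[of A n n Ci n C n])
  have ACiCK: "A * Ci * (C * K) = 1\<^sub>m n"
  proof -
    have "A * Ci * (C * K) = A * Ci * C * K"
      by (rule assoc_mult_mat[symmetric]) (use Ac Ci(3) Cc K(3) in auto)
    also have "\<dots> = A * K" using ACi by simp
    finally show ?thesis using K by simp
  qed
  have equiv: "A * X + B * Z = F \<longleftrightarrow> C * X + M * Z = G"
    if X: "X \<in> carrier_mat n n" and Z: "Z \<in> carrier_mat n n" for X Z
  proof
    assume e: "A * X + B * Z = F"
    have "C * K * (A * X + B * Z) = C * K * (A * X) + C * K * (B * Z)"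
      by (rule mult_add_distrib_mat) (use Cc K(3) Ac Bc X Z in auto)
    also have "C * K * (A * X) = C * X"
      using Cc K(3) Ac X CKA by (simp add: assoc_mult_mat[of "C*K" n n A n X n, symmetric])
    also have "C * K * (B * Z) = M * Z"
      using Cc K(3) Bc Z by (simp add: M_def assoc_mult_mat[of "C*K" n n B n Z n, symmetric])
    finally show "C * X + M * Z = G" using e by (simp add: G_def)
  next
    assume e: "C * X + M * Z = G"
    have "A * Ci * (C * X + M * Z) = A * Ci * (C * X) + A * Ci * (M * Z)"
      by (rule mult_add_distrib_mat) (use Ac Ci(3) Cc Mc X Z in auto)
    also have "A * Ci * (C * X) = A * X"
      using Ac Ci(3) Cc X ACi by (simp add: assoc_mult_mat[of "A*Ci" n n C n X n, symmetric])
    also have "A * Ci * (M * Z) = B * Z"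
    proof -
      have "A * Ci * (M * Z) = A * Ci * M * Z"
        by (rule assoc_mult_mat[symmetric]) (use Ac Ci(3) Mc Z in auto)
      also have "A * Ci * M = A * Ci * (C * K) * B"
        unfolding M_def by (rule assoc_mult_mat[symmetric]) (use Ac Ci(3) Cc K(3) Bc in auto)
      finally have "A * Ci * (M * Z) = A * Ci * (C * K) * B * Z" .
      then show ?thesis using ACiCK Bc by simp
    qed
    finally have "A * X + B * Z = A * Ci * G" using e by simp
    also have "A * Ci * G = F"
    proof -
      have "A * Ci * G = A * Ci * (C * K) * F"
        unfolding G_def by (rule assoc_mult_mat[symmetric]) (use Ac Ci(3) Cc K(3) Fc in auto)
      then show ?thesis using ACiCK Fc by simp
    qed
    finally show "A * X + B * Z = F" .
  qed
  show ?thesis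
  proof (rule ex_ex1I)
    obtain Y where Y: "Y \<in> carrier_mat n n" "Y + M * abs_mat Y = G"
      using mat_exists[OF H Mc Gc] by blast
    define X where "X = Ci * Y"
    have Xc: "X \<in> carrier_mat n n" using Ci(3) Y(1) by (simp add: X_def)
    have CX: "C * X = Y"
      using Cc Ci Y(1) by (simp add: X_def assoc_mult_mat[of C n n Ci n Y n, symmetric])
    have "A * X + B * abs_mat (C * X) = F"
      using equiv[OF Xc, of "abs_mat (C * X)"] CX Y by (simp add: abs_mat_def)
    with Xc show "\<exists>X. X \<in> carrier_mat n n \<and> A * X + B * abs_mat (C * X) = F" by blast
  next
    fix X1 X2
    assume 1: "X1 \<in> carrier_mat n n \<and> A * X1 + B * abs_mat (C * X1) = F"
      and 2: "X2 \<in> carrier_mat n n \<and> A * X2 + B * abs_mat (C * X2) = F"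
    have c1: "C * X1 \<in> carrier_mat n n" "abs_mat (C * X1) \<in> carrier_mat n n"
      using 1 Cc by (auto simp: abs_mat_def)
    have c2: "C * X2 \<in> carrier_mat n n" "abs_mat (C * X2) \<in> carrier_mat n n"
      using 2 Cc by (auto simp: abs_mat_def)
    have e1: "C * X1 + M * abs_mat (C * X1) = G" using equiv[of X1 "abs_mat (C * X1)"] 1 c1 by blast
    have e2: "C * X2 + M * abs_mat (C * X2) = G" using equiv[of X2 "abs_mat (C * X2)"] 2 c2 by blast
    have "C * X1 = C * X2" using mat_unique[OF H Mc c1(1) c2(1)] e1 e2 by simp
    then have "Ci * (C * X1) = Ci * (C * X2)" by simp
    moreover have "Ci * (C * X1) = X1"
    proof -
      have "Ci * (C * X1) = Ci * C * X1"
        by (rule assoc_mult_mat[symmetric]) (use Ci(3) Cc 1 in auto)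
      then show ?thesis using Ci(2) conjunct1[OF 1] by simp
    qed
    moreover have "Ci * (C * X2) = X2"
    proof -
      have "Ci * (C * X2) = Ci * C * X2"
        by (rule assoc_mult_mat[symmetric]) (use Ci(3) Cc 2 in auto)
      then show ?thesis using Ci(2) conjunct1[OF 2] by simp
    qed
    ultimately show "X1 = X2" by simp
  qed
qed

end
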